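(* Let $X$ be a set and $\beta_P\in\Im(P(X))$. Then there exists a fuzzifying topology $T\in\Im(P(X))$ on $X$ such that $\beta_P$ is a pre-base of $T$ if and only if the following two conditions hold: (1) $\beta_P^{(\cup)}(X)=1$, where $\beta_P^{(\cup)}(A)=\bigvee\{\bigwedge_{\lambda\in\Lambda}\beta_P(B_\lambda):\bigcup_{\lambda\in\Lambda}B_\lambda=A\}$; (2) for all $A,B\subseteq X$ and all $x\in A\cap B$, $\min(\beta_P(A),\beta_P(B))\le\sup\{\beta_P(C): x\in C\subseteq A\cap B\}$.
   Context: $\Im(Y)$ denotes the fuzzy subsets $Y\to[0,1]$ and $P(X)$ the power set. A fuzzifying topology on $X$ is $T\in\Im(P(X))$ with $T(X)=1$, $T(A\cap B)\ge\min(T(A),T(B))$ and $T(\bigcup_\lambda A_\lambda)\ge\inf_\lambda T(A_\lambda)$ for arbitrary families. Here $\beta_P$ is called a pre-base of $T$ if $\beta_P(A)\le T(A)$ for all $A$ and, for all $x\in X$ and $A\subseteq X$, $\sup_{x\in B\subseteq A}T(B)\le\sup_{x\in B\subseteq A}\beta_P(B)$. (Condition (2) is the Łukasiewicz-valid formula $\vDash (A\in\beta_P)\wedge(B\in\beta_P)\wedge(x\in A\cap B)\to\exists C((C\in\beta_P)\wedge(x\in C\subseteq A\cap B))$, where $[\varphi\wedge\psi]=\min$, $[\exists]=\sup$, $[\varphi\to\psi]=\min(1,1-[\varphi]+[\psi])$ and $\vDash$ means truth value $1$.) *)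

theory Defs
  imports Complex_Main
begin

text \<open>Fuzzy subsets of P(X) are modelled as functions 'a set => real whose values on
  subsets of the carrier X lie in [0,1]; values outside Pow X are irrelevant.\<close>

definition fuzzy_subset_pow :: "'a set \<Rightarrow> ('a set \<Rightarrow> real) \<Rightarrow> bool" where
  "fuzzy_subset_pow X f \<longleftrightarrow> (\<forall>A. A \<subseteq> X \<longrightarrow> 0 \<le> f A \<and> f A \<le> 1)"

text \<open>Infimum and supremum in the complete lattice [0,1] (empty inf = 1, empty sup = 0).\<close>

definition finf :: "real set \<Rightarrow> real" where
  "finf S = Inf (insert 1 S)"

definition fsup :: "real set \<Rightarrow> real" where
  "fsup S = Sup (insert 0 S)"

definition fuzzifying_topology :: "'a set \<Rightarrow> ('a set \<Rightarrow> real) \<Rightarrow> bool" where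
  "fuzzifying_topology X T \<longleftrightarrow>
     fuzzy_subset_pow X T \<and>
     T X = 1 \<and>
     (\<forall>A B. A \<subseteq> X \<longrightarrow> B \<subseteq> X \<longrightarrow> min (T A) (T B) \<le> T (A \<inter> B)) \<and>
     (\<forall>F. F \<subseteq> Pow X \<longrightarrow> finf (T ` F) \<le> T (\<Union>F))"

definition pre_base :: "'a set \<Rightarrow> ('a set \<Rightarrow> real) \<Rightarrow> ('a set \<Rightarrow> real) \<Rightarrow> bool" where
  "pre_base X \<beta> T \<longleftrightarrow>
     (\<forall>A. A \<subseteq> X \<longrightarrow> \<beta> A \<le> T A) \<and>
     (\<forall>x A. x \<in> X \<longrightarrow> A \<subseteq> X \<longrightarrow>
        fsup {T B | B. x \<in> B \<and> B \<subseteq> A} \<le> fsup {\<beta> B | B. x \<in> B \<and> B \<subseteq> A})"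

definition union_closure :: "'a set \<Rightarrow> ('a set \<Rightarrow> real) \<Rightarrow> 'a set \<Rightarrow> real" where
  "union_closure X \<beta> A = fsup {finf (\<beta> ` F) | F. F \<subseteq> Pow X \<and> \<Union>F = A}"

end

theory Submission
  imports Defs
begin

lemma fsup_ub: "\<forall>s\<in>S. s \<le> 1 \<Longrightarrow> s \<in> S \<Longrightarrow> s \<le> fsup S"
  unfolding fsup_def
  by (rule cSup_upper) (auto intro!: bdd_aboveI[where M=1])

lemma fsup_le: "\<forall>s\<in>S. s \<le> c \<Longrightarrow> 0 \<le> c \<Longrightarrow> fsup S \<le> (c::real)"
  unfolding fsup_def by (rule cSup_least) auto

lemma fsup_ge0: "\<forall>s\<in>S. s \<le> 1 \<Longrightarrow> 0 \<le> fsup S"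
  using fsup_ub[of "insert 0 S" 0] unfolding fsup_def
  by (metis cSup_upper bdd_aboveI[where M=1] insertCI insertE zero_le_one)

lemma fsup_gt: "\<forall>s\<in>S. s \<le> 1 \<Longrightarrow> c < fsup S \<Longrightarrow> 0 \<le> c \<Longrightarrow> \<exists>s\<in>S. c < s"
  unfolding fsup_def
  by (subst (asm) less_cSup_iff) (auto intro!: bdd_aboveI[where M=1])

lemma finf_lb: "\<forall>s\<in>S. 0 \<le> s \<Longrightarrow> s \<in> S \<Longrightarrow> finf S \<le> s"
  unfolding finf_def
  by (rule cInf_lower) (auto intro!: bdd_belowI[where m=0])

lemma finf_ge: "\<forall>s\<in>S. c \<le> s \<Longrightarrow> c \<le> 1 \<Longrightarrow> (c::real) \<le> finf S"
  unfolding finf_def by (rule cInf_greatest) auto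

lemma finf_le1: "\<forall>s\<in>S. 0 \<le> s \<Longrightarrow> finf S \<le> 1"
  unfolding finf_def
  by (rule cInf_lower) (auto intro!: bdd_belowI[where m=0])

lemma finf_ge0: "\<forall>s\<in>S. 0 \<le> s \<Longrightarrow> 0 \<le> finf S"
  by (rule finf_ge) auto

theorem theorem2p2:
  fixes X :: "'a set" and \<beta> :: "'a set \<Rightarrow> real"
  assumes "fuzzy_subset_pow X \<beta>"
  shows "(\<exists>T. fuzzifying_topology X T \<and> pre_base X \<beta> T) \<longleftrightarrow>
           (union_closure X \<beta> X = 1 \<and>
            (\<forall>A B x. A \<subseteq> X \<longrightarrow> B \<subseteq> X \<longrightarrow> x \<in> A \<inter> B \<longrightarrow>
               min (\<beta> A) (\<beta> B) \<le> fsup {\<beta> C | C. x \<in> C \<and> C \<subseteq> A \<inter> B}))"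
proof -
  have b01: "\<And>A. A \<subseteq> X \<Longrightarrow> 0 \<le> \<beta> A \<and> \<beta> A \<le> 1"
    using assms unfolding fuzzy_subset_pow_def by blast
  define N where "N x A = fsup {\<beta> B | B. x \<in> B \<and> B \<subseteq> A}" for x A
  have Nbd: "\<forall>s\<in>{\<beta> B | B. x \<in> B \<and> B \<subseteq> A}. s \<le> 1" if "A \<subseteq> X" for x A
    using b01 that by auto
  have N01: "0 \<le> N x A \<and> N x A \<le> 1" if "A \<subseteq> X" for x A
    unfolding N_def using fsup_ge0[OF Nbd[OF that]] fsup_le[OF Nbd[OF that]] by auto
  have Nub: "\<beta> B \<le> N x A" if "A \<subseteq> X" "x \<in> B" "B \<subseteq> A" for x A B
    unfolding N_def by (rule fsup_ub[OF Nbd[OF that(1)]]) (use that in blast)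
  have Nmono: "N x A \<le> N x A'" if "A \<subseteq> A'" "A' \<subseteq> X" for x A A'
    unfolding N_def[of x A]
  proof (rule fsup_le)
    show "0 \<le> N x A'" using N01 that(2) by blast
    show "\<forall>s\<in>{\<beta> B | B. x \<in> B \<and> B \<subseteq> A}. s \<le> N x A'"
    proof
      fix s assume "s \<in> {\<beta> B | B. x \<in> B \<and> B \<subseteq> A}"
      then obtain B where "s = \<beta> B" "x \<in> B" "B \<subseteq> A" by blast
      then show "s \<le> N x A'" using Nub[OF that(2), of x B] that(1) by blast
    qed
  qed
  have Ngt: "\<exists>B. x \<in> B \<and> B \<subseteq> A \<and> c < \<beta> B" if "A \<subseteq> X" "c < N x A" "0 \<le> c" for x A c
  proof -
    note h = that
    obtain s where "s \<in> {\<beta> B | B. x \<in> B \<and> B \<subseteq> A}" "c < s"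
      using fsup_gt[OF Nbd[OF h(1)], of c] h(2,3) unfolding N_def by blast
    then show ?thesis by blast
  qed
  have ucbd: "\<forall>s\<in>{finf (\<beta> ` F) | F. F \<subseteq> Pow X \<and> \<Union>F = A}. s \<le> 1" for A
  proof
    fix s assume "s \<in> {finf (\<beta> ` F) | F. F \<subseteq> Pow X \<and> \<Union>F = A}"
    then obtain F where F: "s = finf (\<beta> ` F)" "F \<subseteq> Pow X" by blast
    have "\<forall>t\<in>\<beta> ` F. 0 \<le> t" using F(2) b01 by blast
    then show "s \<le> 1" using finf_le1 F(1) by blast
  qed
  show ?thesis
  proof
    assume "\<exists>T. fuzzifying_topology X T \<and> pre_base X \<beta> T"
    then obtain T where top: "fuzzifying_topology X T" and pb: "pre_base X \<beta> T" by blast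
    have T01: "0 \<le> T A \<and> T A \<le> 1" if "A \<subseteq> X" for A
      using top that unfolding fuzzifying_topology_def fuzzy_subset_pow_def by blast
    have TX: "T X = 1" using top unfolding fuzzifying_topology_def by blast
    have Tint: "min (T A) (T B) \<le> T (A \<inter> B)" if "A \<subseteq> X" "B \<subseteq> X" for A B
      using top that unfolding fuzzifying_topology_def by blast
    have pb1: "\<beta> A \<le> T A" if "A \<subseteq> X" for A using pb that unfolding pre_base_def by blast
    have pb2: "fsup {T B | B. x \<in> B \<and> B \<subseteq> A} \<le> N x A" if "x \<in> X" "A \<subseteq> X" for x A
      using pb that unfolding pre_base_def N_def by blast
    have Tle: "T B \<le> fsup {T C | C. x \<in> C \<and> C \<subseteq> A}" if "A \<subseteq> X" "x \<in> B" "B \<subseteq> A" for x A B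
      by (rule fsup_ub) (use that T01 in auto)
    have NX: "N x X = 1" if "x \<in> X" for x
      using pb2[OF that order_refl] Tle[of X x X] that TX N01[of X x] by auto
    have "union_closure X \<beta> X = 1"
    proof (rule ccontr)
      let ?u = "union_closure X \<beta> X"
      have ule: "?u \<le> 1" unfolding union_closure_def by (rule fsup_le) (use ucbd in auto)
      have u0: "0 \<le> ?u" unfolding union_closure_def by (rule fsup_ge0[OF ucbd])
      assume "?u \<noteq> 1"
      then have u1: "?u < 1" using ule by auto
      define c where "c = (?u + 1) / 2"
      have c: "?u < c" "c < 1" "0 \<le> c" using u1 u0 unfolding c_def by auto
      have "\<exists>B. x \<in> B \<and> B \<subseteq> X \<and> c < \<beta> B" if "x \<in> X" for x
        using Ngt[of X c x] NX[OF that] c by auto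
      then obtain Bx where Bx: "\<And>x. x \<in> X \<Longrightarrow> x \<in> Bx x \<and> Bx x \<subseteq> X \<and> c < \<beta> (Bx x)"
        by metis
      define F where "F = Bx ` X"
      have F1: "F \<subseteq> Pow X" "\<Union>F = X" using Bx unfolding F_def by auto
      have "c \<le> finf (\<beta> ` F)"
        by (rule finf_ge) (use Bx c in \<open>auto simp: F_def less_imp_le\<close>)
      also have "finf (\<beta> ` F) \<le> ?u" unfolding union_closure_def
        by (rule fsup_ub[OF ucbd]) (use F1 in blast)
      finally show False using c by auto
    qed
    moreover have "min (\<beta> A) (\<beta> B) \<le> fsup {\<beta> C | C. x \<in> C \<and> C \<subseteq> A \<inter> B}"
      if "A \<subseteq> X" "B \<subseteq> X" "x \<in> A \<inter> B" for A B x
    proof -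
      have "min (\<beta> A) (\<beta> B) \<le> min (T A) (T B)" using pb1 that by (simp add: min.coboundedI1 min.coboundedI2 min_le_iff_disj)
      also have "\<dots> \<le> T (A \<inter> B)" by (rule Tint) (use that in auto)
      also have "\<dots> \<le> fsup {T C | C. x \<in> C \<and> C \<subseteq> A \<inter> B}" by (rule Tle) (use that in auto)
      also have "\<dots> \<le> N x (A \<inter> B)" by (rule pb2) (use that in auto)
      finally show ?thesis unfolding N_def .
    qed
    ultimately show "union_closure X \<beta> X = 1 \<and>
            (\<forall>A B x. A \<subseteq> X \<longrightarrow> B \<subseteq> X \<longrightarrow> x \<in> A \<inter> B \<longrightarrow>
               min (\<beta> A) (\<beta> B) \<le> fsup {\<beta> C | C. x \<in> C \<and> C \<subseteq> A \<inter> B})" by blast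
  next
    assume R: "union_closure X \<beta> X = 1 \<and>
            (\<forall>A B x. A \<subseteq> X \<longrightarrow> B \<subseteq> X \<longrightarrow> x \<in> A \<inter> B \<longrightarrow>
               min (\<beta> A) (\<beta> B) \<le> fsup {\<beta> C | C. x \<in> C \<and> C \<subseteq> A \<inter> B})"
    have uc: "union_closure X \<beta> X = 1" using R by blast
    have c2: "min (\<beta> A) (\<beta> B) \<le> N x (A \<inter> B)" if "A \<subseteq> X" "B \<subseteq> X" "x \<in> A \<inter> B" for A B x
      using R that unfolding N_def by blast
    define T where "T A = finf {N x A | x. x \<in> A}" for A
    have Nset0: "\<forall>s\<in>{N x A | x. x \<in> A}. 0 \<le> s" if "A \<subseteq> X" for A using N01 that by auto
    have T01: "0 \<le> T A \<and> T A \<le> 1" if "A \<subseteq> X" for A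
      unfolding T_def using finf_ge0[OF Nset0[OF that]] finf_le1[OF Nset0[OF that]] by auto
    have TN: "T A \<le> N x A" if "A \<subseteq> X" "x \<in> A" for A x
      unfolding T_def by (rule finf_lb[OF Nset0[OF that(1)]]) (use that in blast)
    have NX: "N x X = 1" if xX: "x \<in> X" for x
    proof (rule ccontr)
      assume "N x X \<noteq> 1"
      then have lt: "N x X < union_closure X \<beta> X" using N01[of X x] uc by auto
      obtain s where s: "s \<in> {finf (\<beta> ` F) | F. F \<subseteq> Pow X \<and> \<Union>F = X}" "N x X < s"
        using fsup_gt[OF ucbd lt[unfolded union_closure_def]] N01[of X x] by auto
      then obtain F where F: "s = finf (\<beta> ` F)" "F \<subseteq> Pow X" "\<Union>F = X" by blast
      then obtain B where B: "B \<in> F" "x \<in> B" using xX by auto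
      have "s \<le> \<beta> B" unfolding F(1) by (rule finf_lb) (use F B b01 in auto)
      moreover have "\<beta> B \<le> N x X" by (rule Nub) (use F B in auto)
      ultimately show False using s by auto
    qed
    have top: "fuzzifying_topology X T"
      unfolding fuzzifying_topology_def fuzzy_subset_pow_def
    proof (intro conjI allI impI)
      show "0 \<le> T A" "T A \<le> 1" if "A \<subseteq> X" for A using T01 that by auto
      show "T X = 1"
      proof (rule antisym)
        show "T X \<le> 1" using T01[of X] by blast
        show "1 \<le> T X" unfolding T_def by (rule finf_ge) (use NX in auto)
      qed
      show "min (T A) (T B) \<le> T (A \<inter> B)" if AX: "A \<subseteq> X" and BX: "B \<subseteq> X" for A B
        unfolding T_def[of "A \<inter> B"]
      proof (rule finf_ge)
        show "min (T A) (T B) \<le> 1" using T01[OF that(1)] by (simp add: min_le_iff_disj)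
        show "\<forall>s\<in>{N x (A \<inter> B) |x. x \<in> A \<inter> B}. min (T A) (T B) \<le> s"
        proof
          fix s assume "s \<in> {N x (A \<inter> B) |x. x \<in> A \<inter> B}"
          then obtain x where x: "s = N x (A \<inter> B)" "x \<in> A \<inter> B" by blast
          have "min (N x A) (N x B) \<le> N x (A \<inter> B)"
          proof (rule ccontr)
            let ?c = "N x (A \<inter> B)"
            assume "\<not> ?thesis"
            then have h: "?c < N x A" "?c < N x B" by auto
            have c0: "0 \<le> ?c" using N01[of "A \<inter> B" x] AX by blast
            obtain D where D: "x \<in> D" "D \<subseteq> A" "?c < \<beta> D" using Ngt[OF AX h(1) c0] by blast
            obtain E where E: "x \<in> E" "E \<subseteq> B" "?c < \<beta> E" using Ngt[OF BX h(2) c0] by blast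
            have "min (\<beta> D) (\<beta> E) \<le> N x (D \<inter> E)" by (rule c2) (use D E AX BX in auto)
            also have "\<dots> \<le> ?c" by (rule Nmono) (use D E AX BX in auto)
            finally show False using D E by auto
          qed
          moreover have "T A \<le> N x A" "T B \<le> N x B" using TN AX BX x by auto
          ultimately show "min (T A) (T B) \<le> s" using x by linarith
        qed
      qed
      show "finf (T ` F) \<le> T (\<Union>F)" if "F \<subseteq> Pow X" for F
        unfolding T_def[of "\<Union>F"]
      proof (rule finf_ge)
        have F0: "\<forall>s\<in>T ` F. 0 \<le> s" using T01 that by auto
        show "finf (T ` F) \<le> 1" by (rule finf_le1[OF F0])
        show "\<forall>s\<in>{N x (\<Union>F) |x. x \<in> \<Union>F}. finf (T ` F) \<le> s"
        proof
          fix s assume "s \<in> {N x (\<Union>F) |x. x \<in> \<Union>F}"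
          then obtain x A where x: "s = N x (\<Union>F)" "x \<in> A" "A \<in> F" by blast
          have "finf (T ` F) \<le> T A" by (rule finf_lb[OF F0]) (use x in blast)
          also have "\<dots> \<le> N x A" by (rule TN) (use x that in auto)
          also have "\<dots> \<le> N x (\<Union>F)" by (rule Nmono) (use x that in auto)
          finally show "finf (T ` F) \<le> s" using x by simp
        qed
      qed
    qed
    have pb: "pre_base X \<beta> T"
      unfolding pre_base_def
    proof (intro conjI allI impI)
      show "\<beta> A \<le> T A" if "A \<subseteq> X" for A
        unfolding T_def
      proof (rule finf_ge)
        show "\<beta> A \<le> 1" using b01 that by blast
        show "\<forall>s\<in>{N x A |x. x \<in> A}. \<beta> A \<le> s"
          using Nub[OF that _ order_refl] by blast
      qed
      show "fsup {T B |B. x \<in> B \<and> B \<subseteq> A} \<le> fsup {\<beta> B |B. x \<in> B \<and> B \<subseteq> A}"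
        if "x \<in> X" "A \<subseteq> X" for x A
        unfolding N_def[symmetric]
      proof (rule fsup_le)
        show "0 \<le> N x A" using N01 that by auto
        show "\<forall>s\<in>{T B |B. x \<in> B \<and> B \<subseteq> A}. s \<le> N x A"
        proof
          fix s assume "s \<in> {T B |B. x \<in> B \<and> B \<subseteq> A}"
          then obtain B where B: "s = T B" "x \<in> B" "B \<subseteq> A" by blast
          have "T B \<le> N x B" by (rule TN) (use B that in auto)
          also have "\<dots> \<le> N x A" by (rule Nmono) (use B that in auto)
          finally show "s \<le> N x A" using B by simp
        qed
      qed
    qed
    show "\<exists>T. fuzzifying_topology X T \<and> pre_base X \<beta> T" using top pb by blast
  qed
qed

end
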